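(* Let $\mathcal{H}$ be an infinite-dimensional complex Hilbert space. (a) Every finitely additive probability measure $\mu$ on $\mathcal{P}_{\mathbb{R}}(\mathcal{H})$ vanishes on all (projections onto) finite-dimensional real subspaces of $\mathcal{H}$. (b) If $\mathcal{H}$ is separable, there exists no probability measure on $\mathcal{P}_{\mathbb{R}}(\mathcal{H})$.
   Context: $\mathcal{P}_{\mathbb{R}}(\mathcal{H})$ is the set of real orthogonal projections onto closed real linear subspaces of $\mathcal{H}$, ordered by inclusion of ranges, with $0,1$, join = projection onto closed real span, meet = projection onto intersection, and involution $E'=1+iEi$, the projection onto the symplectic complement $\{\xi:\mathrm{Im}\langle\xi,h\rangle=0\ \forall h\in E\mathcal{H}\}$. Elements $E,F$ are separated if $E\le F'$. A probability measure on $\mathcal{P}_{\mathbb{R}}(\mathcal{H})$ is a map $\mu$ into $[0,1]$ with $\mu(0)=0$, $\mu(1)=1$, $E\le F\Rightarrow\mu(E)\le\mu(F)$, and $\mu(\bigvee_{E\in\mathcal{Q}_0}E)=\sum_{E\in\mathcal{Q}_0}\mu(E)$ for every countable subset $\mathcal{Q}_0$ of pairwise separated elements; it is finitely additive if this last identity is only required for finite such $\mathcal{Q}_0$. *)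

theory Defs
  imports "HOL-Analysis.Analysis"
begin

text \<open>A complex Hilbert space is modelled as a real Hilbert space
  (type class real_inner + complete_space, the real inner product being
  Re of the complex one) together with the operator J of multiplication
  by the imaginary unit i: a real-linear orthogonal map with J (J x) = - x.\<close>

definition complex_structure :: "('a::{real_inner,complete_space} \<Rightarrow> 'a) \<Rightarrow> bool" where
  "complex_structure J \<longleftrightarrow> linear J \<and> (\<forall>x. J (J x) = - x) \<and> (\<forall>x y. J x \<bullet> J y = x \<bullet> y)"

definition cscale :: "('a::{real_inner,complete_space} \<Rightarrow> 'a) \<Rightarrow> complex \<Rightarrow> 'a \<Rightarrow> 'a" where
  "cscale J c x = Re c *\<^sub>R x + Im c *\<^sub>R J x"

definition cinner :: "('a::{real_inner,complete_space} \<Rightarrow> 'a) \<Rightarrow> 'a \<Rightarrow> 'a \<Rightarrow> complex" where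
  "cinner J x y = Complex (x \<bullet> y) (x \<bullet> J y)"

definition fin_dim_real :: "'a::real_vector set \<Rightarrow> bool" where
  "fin_dim_real S \<longleftrightarrow> (\<exists>B. finite B \<and> span B = S)"

definition real_proj :: "('a::{real_inner,complete_space} \<Rightarrow> 'a) \<Rightarrow> bool" where
  "real_proj P \<longleftrightarrow> bounded_linear P \<and> (\<forall>x. P (P x) = P x) \<and> (\<forall>x y. P x \<bullet> y = x \<bullet> P y)"

definition proj_le :: "('a::{real_inner,complete_space} \<Rightarrow> 'a) \<Rightarrow> ('a \<Rightarrow> 'a) \<Rightarrow> bool" where
  "proj_le E F \<longleftrightarrow> range E \<subseteq> range F"

definition proj_onto :: "'a::{real_inner,complete_space} set \<Rightarrow> ('a \<Rightarrow> 'a)" where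
  "proj_onto S = (THE P. real_proj P \<and> range P = S)"

definition proj_join :: "('a::{real_inner,complete_space} \<Rightarrow> 'a) set \<Rightarrow> ('a \<Rightarrow> 'a)" where
  "proj_join Q = proj_onto (closure (span (\<Union>E\<in>Q. range E)))"

definition proj_prime :: "('a::{real_inner,complete_space} \<Rightarrow> 'a) \<Rightarrow> ('a \<Rightarrow> 'a) \<Rightarrow> ('a \<Rightarrow> 'a)" where
  "proj_prime J E = (\<lambda>x. x + J (E (J x)))"

definition separated :: "('a::{real_inner,complete_space} \<Rightarrow> 'a) \<Rightarrow> ('a \<Rightarrow> 'a) \<Rightarrow> ('a \<Rightarrow> 'a) \<Rightarrow> bool" where
  "separated J E F \<longleftrightarrow> proj_le E (proj_prime J F)"

definition pairwise_separated :: "('a::{real_inner,complete_space} \<Rightarrow> 'a) \<Rightarrow> ('a \<Rightarrow> 'a) set \<Rightarrow> bool" where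
  "pairwise_separated J Q \<longleftrightarrow> (\<forall>E\<in>Q. \<forall>F\<in>Q. E \<noteq> F \<longrightarrow> separated J E F)"

text \<open>Probability measures on P_R(H); mu is only relevant on real projections.\<close>

definition prob_basic :: "('a::{real_inner,complete_space} \<Rightarrow> 'a) \<Rightarrow> (('a \<Rightarrow> 'a) \<Rightarrow> real) \<Rightarrow> bool" where
  "prob_basic J \<mu> \<longleftrightarrow>
     (\<forall>E. real_proj E \<longrightarrow> 0 \<le> \<mu> E \<and> \<mu> E \<le> 1) \<and>
     \<mu> (\<lambda>x. 0) = 0 \<and> \<mu> id = 1 \<and>
     (\<forall>E F. real_proj E \<and> real_proj F \<and> proj_le E F \<longrightarrow> \<mu> E \<le> \<mu> F)"

definition fin_add_prob_measure :: "('a::{real_inner,complete_space} \<Rightarrow> 'a) \<Rightarrow> (('a \<Rightarrow> 'a) \<Rightarrow> real) \<Rightarrow> bool" where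
  "fin_add_prob_measure J \<mu> \<longleftrightarrow> prob_basic J \<mu> \<and>
     (\<forall>Q. finite Q \<and> Q \<subseteq> Collect real_proj \<and> pairwise_separated J Q \<longrightarrow>
        \<mu> (proj_join Q) = (\<Sum>E\<in>Q. \<mu> E))"

definition prob_measure :: "('a::{real_inner,complete_space} \<Rightarrow> 'a) \<Rightarrow> (('a \<Rightarrow> 'a) \<Rightarrow> real) \<Rightarrow> bool" where
  "prob_measure J \<mu> \<longleftrightarrow> prob_basic J \<mu> \<and>
     (\<forall>Q. countable Q \<and> Q \<subseteq> Collect real_proj \<and> pairwise_separated J Q \<longrightarrow>
        (\<mu> has_sum \<mu> (proj_join Q)) Q)"

end

theory Submission
  imports Defs
begin

lemma cs_linear: "complex_structure J \<Longrightarrow> linear J"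
  by (simp add: complex_structure_def)
lemma cs_JJ[simp]: "complex_structure J \<Longrightarrow> J (J x) = - x"
  by (simp add: complex_structure_def)
lemma cs_adj: "complex_structure J \<Longrightarrow> J x \<bullet> y = - (x \<bullet> J y)"
proof -
  assume c: "complex_structure J"
  have "J x \<bullet> y = J (J x) \<bullet> J y" using c unfolding complex_structure_def by metis
  also have "\<dots> = - (x \<bullet> J y)" using c by simp
  finally show ?thesis .
qed
lemma cs_self[simp]: "complex_structure J \<Longrightarrow> x \<bullet> J x = 0"
  using cs_adj[of J x x] by (simp add: inner_commute)
lemma cs_add: "complex_structure J \<Longrightarrow> J (x + y) = J x + J y"
  using cs_linear linear_add by blast
lemma cs_diff: "complex_structure J \<Longrightarrow> J (x - y) = J x - J y"
  using cs_linear linear_diff by blast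
lemma cs_scale: "complex_structure J \<Longrightarrow> J (a *\<^sub>R x) = a *\<^sub>R J x"
  using cs_linear linear_scale by blast
lemma cs_zero: "complex_structure J \<Longrightarrow> J 0 = 0"
  using cs_linear linear_0 by blast
lemma cs_sum: "complex_structure J \<Longrightarrow> J (sum f A) = (\<Sum>a\<in>A. J (f a))"
  using cs_linear linear_sum by blast

lemma cs_span_inv:
  assumes c: "complex_structure J" and x: "x \<in> span (B \<union> J ` B)"
  shows "J x \<in> span (B \<union> J ` B)"
proof -
  have "J x \<in> J ` span (B \<union> J ` B)" using x by blast
  also have "\<dots> = span (J ` (B \<union> J ` B))" using span_linear_image[OF cs_linear[OF c]] by blast
  also have "\<dots> \<subseteq> span (B \<union> J ` B)"
  proof (rule span_minimal)
    show "J ` (B \<union> J ` B) \<subseteq> span (B \<union> J ` B)"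
    proof
      fix y assume "y \<in> J ` (B \<union> J ` B)"
      then obtain b where "b \<in> B" "y = J b \<or> y = J (J b)" by blast
      then show "y \<in> span (B \<union> J ` B)"
        using c by (auto intro: span_base span_neg)
    qed
  qed (rule subspace_span)
  finally show ?thesis .
qed

lemma omega_span:
  assumes c: "complex_structure J" and h: "\<forall>a\<in>A. \<forall>b\<in>B. a \<bullet> J b = 0"
    and x: "x \<in> span A" and y: "y \<in> span B"
  shows "x \<bullet> J y = 0"
proof -
  have "\<forall>b\<in>B. x \<bullet> J b = 0"
  proof
    fix b assume b: "b \<in> B"
    have "orthogonal (J b) x"
      by (rule orthogonal_to_span[OF x]) (use h b in \<open>auto simp: orthogonal_def inner_commute\<close>)
    then show "x \<bullet> J b = 0" by (simp add: orthogonal_def inner_commute)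
  qed
  then have "\<forall>b\<in>B. orthogonal (J x) b" using c by (simp add: orthogonal_def cs_adj)
  then have "orthogonal (J x) y" using orthogonal_to_span[OF y] by blast
  then show ?thesis using c by (simp add: orthogonal_def cs_adj)
qed

lemma rp_fix: "real_proj P \<Longrightarrow> x \<in> range P \<Longrightarrow> P x = x"
  by (auto simp: real_proj_def)

lemma rp_unique:
  assumes P: "real_proj P" and Q: "real_proj Q" and r: "range P = range Q"
  shows "P = Q"
proof
  fix x
  have QP: "Q (P y) = P y" for y using rp_fix[OF Q, of "P y"] r by auto
  have PQ: "P (Q y) = Q y" for y using rp_fix[OF P, of "Q y"] r by auto
  have "P x \<bullet> y = Q x \<bullet> y" for y
  proof -
    have "P x \<bullet> y = Q (P x) \<bullet> y" by (simp add: QP)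
    also have "\<dots> = P x \<bullet> Q y" using Q by (simp add: real_proj_def)
    also have "\<dots> = x \<bullet> P (Q y)" using P by (simp add: real_proj_def)
    also have "\<dots> = Q x \<bullet> y" using Q by (simp add: PQ real_proj_def)
    finally show ?thesis .
  qed
  then have "(P x - Q x) \<bullet> (P x - Q x) = 0" by (simp add: inner_diff_left)
  then show "P x = Q x" by simp
qed

lemma rp_zero: "real_proj (\<lambda>x. 0)"
  by (simp add: real_proj_def bounded_linear_zero)
lemma rp_id: "real_proj id"
  by (simp add: real_proj_def id_def bounded_linear_ident)

lemma rp_exists:
  fixes B :: "'a::{real_inner,complete_space} set"
  assumes "finite B"
  shows "\<exists>P. real_proj P \<and> range P = span B"
  using assms
proof (induction B rule: finite_induct)
  case empty
  show ?case by (rule exI[of _ "\<lambda>x. 0"]) (auto simp: rp_zero)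
next
  case (insert b B)
  then obtain P where P: "real_proj P" "range P = span B" by blast
  have bl: "bounded_linear P" and idem: "\<And>x. P (P x) = P x" and sa: "\<And>x y. P x \<bullet> y = x \<bullet> P y"
    using P(1) by (auto simp: real_proj_def)
  define c where "c = b - P b"
  have Pc: "P c = 0" using idem bl by (simp add: c_def linear_simps)
  have cP: "c \<bullet> P y = 0" for y
    by (simp add: c_def inner_diff_left sa idem)
  have cP': "P y \<bullet> c = 0" for y using cP by (simp add: inner_commute)
  show ?case
  proof (cases "c = 0")
    case True
    then have "b = P b" by (simp add: c_def)
    then have "b \<in> span B" using P(2) by (metis rangeI)
    then have "span (insert b B) = span B" by (simp add: span_redundant)
    then show ?thesis using P by auto
  next
    case False
    then have cc: "c \<bullet> c \<noteq> 0" by simp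
    define P' where "P' = (\<lambda>x. P x + ((x \<bullet> c) / (c \<bullet> c)) *\<^sub>R c)"
    have bl': "bounded_linear P'" unfolding P'_def
      by (intro bounded_linear_add bl bounded_linear_scaleR_const
            bounded_linear_compose[OF bounded_linear_divide bounded_linear_inner_left])
    have idem': "P' (P' x) = P' x" for x
      using cc by (simp add: P'_def linear_simps[OF bl] idem Pc inner_add_left cP')
    have sa': "P' x \<bullet> y = x \<bullet> P' y" for x y
    proof -
      have "y \<bullet> P x = x \<bullet> P y" using sa[of x y] by (simp add: inner_commute)
      then show ?thesis by (simp add: P'_def inner_add_left inner_add_right sa inner_commute mult.commute)
    qed
    have rP': "range P' = span (insert b B)"
    proof
      show "range P' \<subseteq> span (insert b B)"
      proof
        fix z assume "z \<in> range P'"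
        then obtain x where z: "z = P' x" by blast
        have "P x \<in> span B" using P(2) by blast
        then have "P x \<in> span (insert b B)" by (meson span_mono subset_insertI subsetD)
        moreover have "P b \<in> span B" using P(2) by blast
        then have "P b \<in> span (insert b B)" by (meson span_mono subset_insertI subsetD)
        then have "c \<in> span (insert b B)" unfolding c_def by (simp add: span_base span_diff)
        ultimately show "z \<in> span (insert b B)" by (simp add: z P'_def span_add span_mul)
      qed
    next
      have sub: "subspace (range P')"
        using bl' by (simp add: bounded_linear.linear linear_subspace_image)
      have "insert b B \<subseteq> range P'"
      proof
        fix x assume "x \<in> insert b B"
        then show "x \<in> range P'"
        proof
          assume xb: "x = b"
          have "b \<bullet> c = c \<bullet> c" by (simp add: c_def inner_diff_left inner_diff_right sa idem inner_commute)
          then have "P' b = b" using cc by (simp add: P'_def c_def)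
          then show ?thesis using xb by (metis rangeI)
        next
          assume "x \<in> B"
          then have "x \<in> range P" using P(2) span_base by blast
          then have "P x = x" by (rule rp_fix[OF P(1)])
          then have "P' x = x" by (metis P'_def cP' add.right_neutral div_0 scale_zero_left)
          then show ?thesis by (metis rangeI)
        qed
      qed
      then show "span (insert b B) \<subseteq> range P'" using sub by (simp add: span_minimal)
    qed
    show ?thesis using bl' idem' sa' rP' by (auto simp: real_proj_def)
  qed
qed

lemma rp_closed: "real_proj P \<Longrightarrow> closed (range P)"
proof -
  assume P: "real_proj P"
  have "range P = {x. P x = x}" using P by (auto simp: real_proj_def) (metis rangeI)
  moreover have "closed {x. P x = x}"
    using P by (intro closed_Collect_eq) (auto simp: real_proj_def linear_continuous_on continuous_on_id)
  ultimately show ?thesis by simp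
qed

lemma proj_onto_eq: "real_proj P \<Longrightarrow> proj_onto (range P) = P"
  unfolding proj_onto_def by (rule the_equality) (auto intro: rp_unique)

lemma proj_onto_span:
  fixes B :: "'a::{real_inner,complete_space} set"
  assumes "finite B"
  shows "real_proj (proj_onto (span B)) \<and> range (proj_onto (span B)) = span B"
  using rp_exists[OF assms] proj_onto_eq by metis

lemma sep_crit:
  assumes c: "complex_structure J" and E: "real_proj E" and F: "real_proj F"
    and h: "\<forall>x\<in>range E. \<forall>y\<in>range F. x \<bullet> J y = 0"
  shows "separated J E F"
  unfolding separated_def proj_le_def
proof
  fix x assume x: "x \<in> range E"
  have "F (J x) \<bullet> z = 0" for z
  proof -
    have "F (J x) \<bullet> z = J x \<bullet> F z" using F by (simp add: real_proj_def)
    also have "\<dots> = - (x \<bullet> J (F z))" using c by (simp add: cs_adj)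
    also have "\<dots> = 0" using h x by auto
    finally show ?thesis .
  qed
  then have "F (J x) = 0" by (metis inner_eq_zero_iff)
  then have "proj_prime J F x = x" using c by (simp add: proj_prime_def cs_zero)
  then show "x \<in> range (proj_prime J F)" by (metis rangeI)
qed

lemma omega_sym:
  assumes c: "complex_structure J" and h: "\<forall>a\<in>A. \<forall>b\<in>B. a \<bullet> J b = 0"
  shows "\<forall>b\<in>B. \<forall>a\<in>A. b \<bullet> J a = 0"
proof (intro ballI)
  fix a b assume "a \<in> A" "b \<in> B"
  then have "a \<bullet> J b = 0" using h by blast
  then have "J b \<bullet> a = 0" using c by (simp add: cs_adj inner_commute)
  then show "b \<bullet> J a = 0" using c by (simp add: cs_adj)
qed

lemma sep_span:
  assumes c: "complex_structure J" and A: "finite A" and B: "finite B"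
    and h: "\<forall>a\<in>A. \<forall>b\<in>B. a \<bullet> J b = 0"
  shows "separated J (proj_onto (span A)) (proj_onto (span B))"
proof -
  note pa = proj_onto_span[OF A] and pb = proj_onto_span[OF B]
  show ?thesis
    apply (rule sep_crit[OF c pa[THEN conjunct1] pb[THEN conjunct1]])
    using omega_span[OF c h] pa pb by auto
qed

lemma join_span:
  fixes G :: "'i \<Rightarrow> 'a::{real_inner,complete_space} set"
  assumes fI: "finite I" and fG: "\<And>i. i \<in> I \<Longrightarrow> finite (G i)"
  shows "proj_join ((\<lambda>i. proj_onto (span (G i))) ` I) = proj_onto (span (\<Union>i\<in>I. G i))"
proof -
  have r: "range (proj_onto (span (G i))) = span (G i)" if "i \<in> I" for i
    using proj_onto_span[OF fG[OF that]] by blast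
  have "(\<Union>E\<in>(\<lambda>i. proj_onto (span (G i))) ` I. range E) = (\<Union>i\<in>I. span (G i))"
    using r by auto
  moreover have "span (\<Union>i\<in>I. span (G i)) = span (\<Union>i\<in>I. G i)"
    unfolding span_eq
    by (auto intro: span_base dest: span_mono[THEN subsetD, rotated] )
  moreover have fU: "finite (\<Union>i\<in>I. G i)" using fI fG by blast
  have "closed (span (\<Union>i\<in>I. G i))"
    using proj_onto_span[OF fU] rp_closed by metis
  ultimately show ?thesis unfolding proj_join_def by (simp add: closure_closed)
qed

lemma fin_add_basic:
  assumes "fin_add_prob_measure J \<mu>"
  shows "real_proj E \<Longrightarrow> 0 \<le> \<mu> E" "real_proj E \<Longrightarrow> \<mu> E \<le> 1" "\<mu> (\<lambda>x. 0) = 0"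
    "real_proj E \<Longrightarrow> real_proj F \<Longrightarrow> range E \<subseteq> range F \<Longrightarrow> \<mu> E \<le> \<mu> F"
  using assms by (auto simp: fin_add_prob_measure_def prob_basic_def proj_le_def)

lemma counting:
  fixes G :: "nat \<Rightarrow> 'a::{real_inner,complete_space} set"
  assumes c: "complex_structure J" and mu: "fin_add_prob_measure J \<mu>"
    and fG: "\<And>k. k < n \<Longrightarrow> finite (G k)"
    and inj: "inj_on (\<lambda>k. proj_onto (span (G k))) {..<n}"
    and om: "\<And>j k. j < n \<Longrightarrow> k < n \<Longrightarrow> j \<noteq> k \<Longrightarrow> \<forall>x\<in>G j. \<forall>y\<in>G k. x \<bullet> J y = 0"
  shows "(\<Sum>k<n. \<mu> (proj_onto (span (G k)))) \<le> 1"
proof -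
  define Q where "Q = (\<lambda>k. proj_onto (span (G k))) ` {..<n}"
  have fQ: "finite Q" by (simp add: Q_def)
  have sQ: "Q \<subseteq> Collect real_proj" using proj_onto_span[OF fG] by (auto simp: Q_def)
  have pQ: "pairwise_separated J Q"
    unfolding pairwise_separated_def Q_def
    using sep_span[OF c fG fG om] by blast
  have "\<mu> (proj_join Q) = (\<Sum>E\<in>Q. \<mu> E)"
    using mu fQ sQ pQ by (simp add: fin_add_prob_measure_def)
  also have "\<dots> = (\<Sum>k<n. \<mu> (proj_onto (span (G k))))"
    unfolding Q_def by (rule sum.reindex[OF inj, unfolded comp_def])
  finally have eq: "\<mu> (proj_join Q) = (\<Sum>k<n. \<mu> (proj_onto (span (G k))))" .
  have fU: "finite (\<Union>i\<in>{..<n}. G i)" using fG by blast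
  have "proj_join Q = proj_onto (span (\<Union>i\<in>{..<n}. G i))"
    unfolding Q_def by (rule join_span) (auto simp: fG)
  then have "real_proj (proj_join Q)" using proj_onto_span[OF fU] by simp
  then show ?thesis using eq fin_add_basic(2)[OF mu] by metis
qed

lemma pair_bound:
  assumes c: "complex_structure J" and mu: "fin_add_prob_measure J \<mu>"
    and A: "finite A" and B: "finite B" and h: "\<forall>a\<in>A. \<forall>b\<in>B. a \<bullet> J b = 0"
  shows "\<mu> (proj_onto (span (A \<union> B))) \<le> \<mu> (proj_onto (span A)) + \<mu> (proj_onto (span B))"
proof -
  define G where "G = (\<lambda>i. if i then A else B)"
  have Q: "(\<lambda>i. proj_onto (span (G i))) ` UNIV = {proj_onto (span A), proj_onto (span B)}"
    by (auto simp: G_def UNIV_bool)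
  have U: "(\<Union>i\<in>UNIV. G i) = A \<union> B" by (auto simp: G_def UNIV_bool)
  have j: "proj_join {proj_onto (span A), proj_onto (span B)} = proj_onto (span (A \<union> B))"
  proof -
    have "proj_join ((\<lambda>i. proj_onto (span (G i))) ` UNIV) = proj_onto (span (\<Union>i\<in>UNIV. G i))"
      by (rule join_span) (auto simp: G_def A B)
    then show ?thesis by (simp only: Q U)
  qed
  have pa: "real_proj (proj_onto (span A))" and pb: "real_proj (proj_onto (span B))"
    using proj_onto_span A B by blast+
  have ps: "pairwise_separated J {proj_onto (span A), proj_onto (span B)}"
    unfolding pairwise_separated_def
    using sep_span[OF c A B h] sep_span[OF c B A omega_sym[OF c h]] by blast
  have "\<mu> (proj_onto (span (A \<union> B))) = (\<Sum>E\<in>{proj_onto (span A), proj_onto (span B)}. \<mu> E)"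
    using mu ps pa pb by (simp add: fin_add_prob_measure_def j[symmetric])
  also have "\<dots> \<le> \<mu> (proj_onto (span A)) + \<mu> (proj_onto (span B))"
    using fin_add_basic(1)[OF mu pb] by (cases "proj_onto (span A) = proj_onto (span B)") auto
  finally show ?thesis .
qed

lemma archi:
  fixes x :: real
  assumes "\<And>n::nat. n \<ge> 1 \<Longrightarrow> real n * x \<le> 2"
  shows "x \<le> 0"
proof (rule ccontr)
  assume "\<not> x \<le> 0"
  then have x: "x > 0" by simp
  obtain n :: nat where n: "3 / x < real n" using reals_Archimedean2 by blast
  then have "n \<ge> 1" using x by (metis divide_pos_pos less_le_not_le of_nat_0 pos_add_strict zero_less_numeral
        less_one not_le of_nat_less_iff)
  moreover have "3 < real n * x" using n x by (simp add: field_simps)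
  ultimately show False using assms by fastforce
qed

lemma fresh:
  fixes X :: "'a::{real_inner,complete_space} set"
  assumes c: "complex_structure J" and nf: "\<not> fin_dim_real (UNIV :: 'a set)" and fX: "finite X"
  shows "\<exists>e. e \<bullet> e = 1 \<and> (\<forall>x\<in>X. e \<bullet> x = 0 \<and> e \<bullet> J x = 0)"
proof -
  define W where "W = span (X \<union> J ` X)"
  have fW: "finite (X \<union> J ` X)" using fX by simp
  obtain P where P: "real_proj P" "range P = W" using rp_exists[OF fW] W_def by blast
  have "W \<noteq> UNIV" using nf fW unfolding W_def fin_dim_real_def by blast
  then obtain y where y: "y \<notin> W" by blast
  define d where "d = y - P y"
  have "d \<noteq> 0" using y P(2) by (auto simp: d_def)
  have dW: "d \<bullet> w = 0" if "w \<in> W" for w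
  proof -
    have "P w = w" using rp_fix[OF P(1)] P(2) that by blast
    then have "d \<bullet> w = y \<bullet> P w - P y \<bullet> P w" by (simp add: d_def inner_diff_left)
    also have "\<dots> = 0" using P(1) by (simp add: real_proj_def)
    finally show ?thesis .
  qed
  define e where "e = (1 / norm d) *\<^sub>R d"
  have "e \<bullet> e = 1" using \<open>d \<noteq> 0\<close>
    by (simp add: e_def power2_norm_eq_inner[symmetric] power2_eq_square)
  moreover have "\<forall>x\<in>X. e \<bullet> x = 0 \<and> e \<bullet> J x = 0"
    using dW by (auto simp: e_def W_def intro: span_base)
  ultimately show ?thesis by blast
qed

lemma fresh_seq:
  fixes X :: "'a::{real_inner,complete_space} set"
  assumes c: "complex_structure J" and nf: "\<not> fin_dim_real (UNIV :: 'a set)" and fX: "finite X"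
  shows "\<exists>e::nat \<Rightarrow> 'a. \<forall>k<n. e k \<bullet> e k = 1 \<and> (\<forall>x\<in>X. e k \<bullet> x = 0 \<and> e k \<bullet> J x = 0)
            \<and> (\<forall>j<n. j \<noteq> k \<longrightarrow> e j \<bullet> e k = 0) \<and> (\<forall>j<n. e j \<bullet> J (e k) = 0)"
proof (induction n)
  case 0
  then show ?case by simp
next
  case (Suc n)
  then obtain e :: "nat \<Rightarrow> 'a" where e: "\<forall>k<n. e k \<bullet> e k = 1 \<and> (\<forall>x\<in>X. e k \<bullet> x = 0 \<and> e k \<bullet> J x = 0)
            \<and> (\<forall>j<n. j \<noteq> k \<longrightarrow> e j \<bullet> e k = 0) \<and> (\<forall>j<n. e j \<bullet> J (e k) = 0)" by blast
  have "finite (X \<union> e ` {..<n})" using fX by simp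
  from fresh[OF c nf this] obtain f where
    f: "f \<bullet> f = 1" "\<forall>x\<in>X \<union> e ` {..<n}. f \<bullet> x = 0 \<and> f \<bullet> J x = 0" by blast
  define e' where "e' = e(n := f)"
  have fe: "f \<bullet> e j = 0" "e j \<bullet> f = 0" "f \<bullet> J (e j) = 0" "e j \<bullet> J f = 0" if "j < n" for j
  proof -
    show "f \<bullet> e j = 0" "f \<bullet> J (e j) = 0" using f(2) that by auto
    then show "e j \<bullet> f = 0" by (simp add: inner_commute)
    have "J (e j) \<bullet> f = 0" using \<open>f \<bullet> J (e j) = 0\<close> by (simp add: inner_commute)
    then show "e j \<bullet> J f = 0" using c by (simp add: cs_adj)
  qed
  have "\<forall>k<Suc n. e' k \<bullet> e' k = 1 \<and> (\<forall>x\<in>X. e' k \<bullet> x = 0 \<and> e' k \<bullet> J x = 0)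
            \<and> (\<forall>j<Suc n. j \<noteq> k \<longrightarrow> e' j \<bullet> e' k = 0) \<and> (\<forall>j<Suc n. e' j \<bullet> J (e' k) = 0)"
  proof (intro allI impI)
    fix k assume k: "k < Suc n"
    show "e' k \<bullet> e' k = 1 \<and> (\<forall>x\<in>X. e' k \<bullet> x = 0 \<and> e' k \<bullet> J x = 0)
            \<and> (\<forall>j<Suc n. j \<noteq> k \<longrightarrow> e' j \<bullet> e' k = 0) \<and> (\<forall>j<Suc n. e' j \<bullet> J (e' k) = 0)"
    proof (cases "k = n")
      case True
      then show ?thesis using f fe c by (auto simp: e'_def less_Suc_eq)
    next
      case False
      then have kn: "k < n" using k by simp
      then show ?thesis using e fe[OF kn] c False by (auto simp: e'_def less_Suc_eq)
    qed
  qed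
  then show ?case by blast
qed

lemma isotropic_zero:
  fixes B :: "'a::{real_inner,complete_space} set"
  assumes c: "complex_structure J" and nf: "\<not> fin_dim_real (UNIV :: 'a set)"
    and mu: "fin_add_prob_measure J \<mu>" and fB: "finite B"
    and iso: "\<forall>a\<in>B. \<forall>b\<in>B. a \<bullet> J b = 0"
  shows "\<mu> (proj_onto (span B)) = 0"
proof -
  note pB = proj_onto_span[OF fB]
  have "real n * \<mu> (proj_onto (span B)) \<le> 2" if "n \<ge> 1" for n
  proof -
    obtain e :: "nat \<Rightarrow> 'a" where e: "\<forall>k<n. e k \<bullet> e k = 1 \<and> (\<forall>x\<in>B. e k \<bullet> x = 0 \<and> e k \<bullet> J x = 0)
            \<and> (\<forall>j<n. j \<noteq> k \<longrightarrow> e j \<bullet> e k = 0) \<and> (\<forall>j<n. e j \<bullet> J (e k) = 0)"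
      using fresh_seq[OF c nf fB, of n] by blast
    have e1: "\<And>k. k < n \<Longrightarrow> e k \<bullet> e k = 1"
      and e2: "\<And>k x. k < n \<Longrightarrow> x \<in> B \<Longrightarrow> e k \<bullet> x = 0"
      and e3: "\<And>k x. k < n \<Longrightarrow> x \<in> B \<Longrightarrow> e k \<bullet> J x = 0"
      and e4: "\<And>j k. j < n \<Longrightarrow> k < n \<Longrightarrow> j \<noteq> k \<Longrightarrow> e j \<bullet> e k = 0"
      and e5: "\<And>j k. j < n \<Longrightarrow> k < n \<Longrightarrow> e j \<bullet> J (e k) = 0"
      using e by blast+
    define G where "G = (\<lambda>k. insert (e k) B)"
    have fG: "finite (G k)" for k using fB by (simp add: G_def)
    have inj: "inj_on (\<lambda>k. proj_onto (span (G k))) {..<n}"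
    proof (rule inj_onI)
      fix j k assume j: "j \<in> {..<n}" and k: "k \<in> {..<n}"
        and eq: "proj_onto (span (G j)) = proj_onto (span (G k))"
      show "j = k"
      proof (rule ccontr)
        assume jk: "j \<noteq> k"
        have "span (G j) = range (proj_onto (span (G j)))" using proj_onto_span[OF fG[of j]] by simp
        also have "\<dots> = span (G k)" using eq proj_onto_span[OF fG[of k]] by simp
        finally have sp: "span (G j) = span (G k)" .
        have "e j \<in> span (G j)" unfolding G_def by (rule span_base) simp
        then have "e j \<in> span (insert (e k) B)" using sp by (simp add: G_def)
        then obtain t where t: "e j - t *\<^sub>R e k \<in> span B" by (auto simp: span_breakdown_eq)
        have "orthogonal (e j) (e j - t *\<^sub>R e k)"
          by (rule orthogonal_to_span[OF t]) (use e2 j in \<open>simp add: orthogonal_def\<close>)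
        moreover have "e j \<bullet> (e j - t *\<^sub>R e k) = 1" using e1 e4 j k jk by (simp add: inner_diff_right)
        ultimately show False by (simp add: orthogonal_def)
      qed
    qed
    have om: "\<forall>x\<in>G j. \<forall>y\<in>G k. x \<bullet> J y = 0" if "j < n" "k < n" "j \<noteq> k" for j k
    proof (intro ballI)
      fix x y assume x: "x \<in> G j" and y: "y \<in> G k"
      have ek: "b \<bullet> J (e k) = 0" if "b \<in> B" for b
      proof -
        have "e k \<bullet> J b = 0" by (rule e3[OF \<open>k < n\<close> that])
        then have "J b \<bullet> e k = 0" by (simp only: inner_commute)
        moreover have "J b \<bullet> e k = - (b \<bullet> J (e k))" by (rule cs_adj[OF c])
        ultimately show ?thesis by simp
      qed
      show "x \<bullet> J y = 0" using x y that unfolding G_def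
        by (auto simp: iso ek e3 e5)
    qed
    have "(\<Sum>k<n. \<mu> (proj_onto (span (G k)))) \<le> 1"
      by (rule counting[OF c mu fG inj om]) auto
    moreover have "\<mu> (proj_onto (span B)) \<le> \<mu> (proj_onto (span (G k)))" for k
    proof (rule fin_add_basic(4)[OF mu])
      show "real_proj (proj_onto (span B))" using pB by simp
      show "real_proj (proj_onto (span (G k)))" using proj_onto_span[OF fG[of k]] by simp
      have "span B \<subseteq> span (G k)" unfolding G_def by (rule span_mono) blast
      then show "range (proj_onto (span B)) \<subseteq> range (proj_onto (span (G k)))"
        using pB proj_onto_span[OF fG[of k]] by simp
    qed
    then have "(\<Sum>k<n. \<mu> (proj_onto (span B))) \<le> (\<Sum>k<n. \<mu> (proj_onto (span (G k))))"
      by (intro sum_mono) auto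
    ultimately show ?thesis by simp
  qed
  then have "\<mu> (proj_onto (span B)) \<le> 0" by (rule archi)
  moreover have "\<mu> (proj_onto (span B)) \<ge> 0" using fin_add_basic(1)[OF mu] pB by blast
  ultimately show ?thesis by simp
qed

lemma mono_span:
  assumes mu: "fin_add_prob_measure J \<mu>" and A: "finite A" and B: "finite B" and sub: "span A \<subseteq> span B"
  shows "\<mu> (proj_onto (span A)) \<le> \<mu> (proj_onto (span B))"
  using fin_add_basic(4)[OF mu] proj_onto_span[OF A] proj_onto_span[OF B] sub by simp

lemma line_zero:
  fixes u :: "'a::{real_inner,complete_space}"
  assumes c: "complex_structure J" and nf: "\<not> fin_dim_real (UNIV :: 'a set)"
    and mu: "fin_add_prob_measure J \<mu>" and uu: "u \<bullet> u = 1"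
  shows "\<mu> (proj_onto (span {u, J u})) = 0"
proof -
  have fL: "finite {u, J u}" by simp
  note pL = proj_onto_span[OF fL]
  have "real n * \<mu> (proj_onto (span {u, J u})) \<le> 2" if "n \<ge> 1" for n
  proof -
    obtain e :: "nat \<Rightarrow> 'a" where e: "\<forall>k<n. e k \<bullet> e k = 1 \<and> (\<forall>x\<in>{u}. e k \<bullet> x = 0 \<and> e k \<bullet> J x = 0)
            \<and> (\<forall>j<n. j \<noteq> k \<longrightarrow> e j \<bullet> e k = 0) \<and> (\<forall>j<n. e j \<bullet> J (e k) = 0)"
      using fresh_seq[OF c nf, of "{u}" n] by blast
    have e1: "\<And>k. k < n \<Longrightarrow> e k \<bullet> e k = 1"
      and eu: "\<And>k. k < n \<Longrightarrow> e k \<bullet> u = 0"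
      and euJ: "\<And>k. k < n \<Longrightarrow> e k \<bullet> J u = 0"
      and e4: "\<And>j k. j < n \<Longrightarrow> k < n \<Longrightarrow> j \<noteq> k \<Longrightarrow> e j \<bullet> e k = 0"
      and e5: "\<And>j k. j < n \<Longrightarrow> k < n \<Longrightarrow> e j \<bullet> J (e k) = 0"
      using e by blast+
    have ue: "\<And>k. k < n \<Longrightarrow> u \<bullet> e k = 0" using eu by (simp add: inner_commute)
    have uJe: "u \<bullet> J (e k) = 0" if "k < n" for k
    proof -
      have "J u \<bullet> e k = 0" using euJ[OF that] by (simp only: inner_commute)
      moreover have "J u \<bullet> e k = - (u \<bullet> J (e k))" by (rule cs_adj[OF c])
      ultimately show ?thesis by simp
    qed
    define S where "S = (\<Sum>k<n. e k)"
    have eS: "e j \<bullet> S = 1" if "j < n" for j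
    proof -
      have "e j \<bullet> S = (\<Sum>k<n. e j \<bullet> e k)" by (simp add: S_def inner_sum_right)
      also have "\<dots> = (\<Sum>k<n. if k = j then 1 else 0)"
        by (rule sum.cong) (auto simp: e1 e4 that)
      also have "\<dots> = 1" using that by simp
      finally show ?thesis .
    qed
    have Se: "S \<bullet> e j = 1" if "j < n" for j using eS[OF that] by (simp add: inner_commute)
    have uS: "u \<bullet> S = 0" by (simp add: S_def inner_sum_right ue)
    have Su: "S \<bullet> u = 0" using uS by (simp add: inner_commute)
    have JS: "J S = (\<Sum>k<n. J (e k))" by (simp add: S_def cs_sum[OF c])
    have eJS: "e j \<bullet> J S = 0" if "j < n" for j by (simp add: JS inner_sum_right e5 that)
    have SJe: "S \<bullet> J (e j) = 0" if "j < n" for j by (simp add: S_def inner_sum_left e5 that)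
    have uJS: "u \<bullet> J S = 0" by (simp add: JS inner_sum_right uJe)
    have SJu: "S \<bullet> J u = 0" by (simp add: S_def inner_sum_left euJ)
    have cself: "x \<bullet> J x = 0" for x by (rule cs_self[OF c])
    note N = inner_diff_left inner_diff_right inner_add_left inner_add_right
      inner_minus_left inner_minus_right cs_diff[OF c] cs_add[OF c] cs_JJ[OF c] cs_adj[OF c]
      uu e1 eu euJ e4 e5 ue uJe eS Se uS Su eJS SJe uJS SJu cself
    define A where "A = (\<lambda>k. {e k, J (S - e k)})"
    define Bk where "Bk = (\<lambda>k. {u - e k, J (u + S - e k)})"
    have fA: "finite (A k)" for k by (simp add: A_def)
    have fB: "finite (Bk k)" for k by (simp add: Bk_def)
    have isoA: "\<forall>a\<in>A k. \<forall>b\<in>A k. a \<bullet> J b = 0" if "k < n" for k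
      using that by (simp add: A_def N)
    have AB: "\<forall>a\<in>A k. \<forall>b\<in>Bk k. a \<bullet> J b = 0" if "k < n" for k
      using that by (simp add: A_def Bk_def N)
    have om: "\<forall>x\<in>Bk j. \<forall>y\<in>Bk k. x \<bullet> J y = 0" if "j < n" "k < n" "j \<noteq> k" for j k
      using that by (simp add: Bk_def N)
    have inj: "inj_on (\<lambda>k. proj_onto (span (Bk k))) {..<n}"
    proof (rule inj_onI)
      fix j k assume j: "j \<in> {..<n}" and k: "k \<in> {..<n}"
        and eq: "proj_onto (span (Bk j)) = proj_onto (span (Bk k))"
      show "j = k"
      proof (rule ccontr)
        assume jk: "j \<noteq> k"
        have "span (Bk j) = range (proj_onto (span (Bk j)))" using proj_onto_span[OF fB[of j]] by simp
        also have "\<dots> = span (Bk k)" using eq proj_onto_span[OF fB[of k]] by simp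
        finally have sp: "span (Bk j) = span (Bk k)" .
        have "u - e j \<in> span (Bk j)" unfolding Bk_def by (rule span_base) simp
        then have "u - e j \<in> span (insert (u - e k) {J (u + S - e k)})" using sp by (simp add: Bk_def)
        then obtain a where "(u - e j) - a *\<^sub>R (u - e k) \<in> span {J (u + S - e k)}"
          by (auto simp: span_breakdown_eq)
        then obtain b where eqb: "(u - e j) - a *\<^sub>R (u - e k) = b *\<^sub>R J (u + S - e k)"
          by (auto simp: span_singleton)
        have "((u - e j) - a *\<^sub>R (u - e k)) \<bullet> u = (b *\<^sub>R J (u + S - e k)) \<bullet> u"
          by (simp only: eqb)
        then have a1: "a = 1" using j k by (simp add: N)
        have "((u - e j) - a *\<^sub>R (u - e k)) \<bullet> e k = (b *\<^sub>R J (u + S - e k)) \<bullet> e k"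
          by (simp only: eqb)
        then have a0: "a = 0" using j k jk by (simp add: N)
        show False using a0 a1 by simp
      qed
    qed
    have cnt: "(\<Sum>k<n. \<mu> (proj_onto (span (Bk k)))) \<le> 1"
      by (rule counting[OF c mu fB inj om]) auto
    have le: "\<mu> (proj_onto (span {u, J u})) \<le> \<mu> (proj_onto (span (Bk k)))" if "k < n" for k
    proof -
      have s1: "u \<in> span (A k \<union> Bk k)"
      proof -
        have "u = (u - e k) + e k" by simp
        moreover have "u - e k \<in> span (A k \<union> Bk k)" by (rule span_base) (simp add: Bk_def)
        moreover have "e k \<in> span (A k \<union> Bk k)" by (rule span_base) (simp add: A_def)
        ultimately show ?thesis by (metis span_add)
      qed
      have s2: "J u \<in> span (A k \<union> Bk k)"
      proof -
        have "J u = J (u + S - e k) - J (S - e k)" by (simp add: cs_diff[OF c] cs_add[OF c])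
        moreover have "J (u + S - e k) \<in> span (A k \<union> Bk k)" by (rule span_base) (simp add: Bk_def)
        moreover have "J (S - e k) \<in> span (A k \<union> Bk k)" by (rule span_base) (simp add: A_def)
        ultimately show ?thesis by (metis span_diff)
      qed
      have sub: "span {u, J u} \<subseteq> span (A k \<union> Bk k)"
        using s1 s2 by (simp add: span_minimal subspace_span)
      have "\<mu> (proj_onto (span {u, J u})) \<le> \<mu> (proj_onto (span (A k \<union> Bk k)))"
        by (rule mono_span[OF mu fL _ sub]) (simp add: fA fB)
      also have "\<dots> \<le> \<mu> (proj_onto (span (A k))) + \<mu> (proj_onto (span (Bk k)))"
        by (rule pair_bound[OF c mu fA fB AB[OF that]])
      also have "\<mu> (proj_onto (span (A k))) = 0"
        by (rule isotropic_zero[OF c nf mu fA isoA[OF that]])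
      finally show ?thesis by simp
    qed
    have "(\<Sum>k<n. \<mu> (proj_onto (span {u, J u}))) \<le> (\<Sum>k<n. \<mu> (proj_onto (span (Bk k))))"
      by (rule sum_mono) (simp add: le)
    then show ?thesis using cnt by simp
  qed
  then have "\<mu> (proj_onto (span {u, J u})) \<le> 0" by (rule archi)
  moreover have "\<mu> (proj_onto (span {u, J u})) \<ge> 0" using fin_add_basic(1)[OF mu] pL by simp
  ultimately show ?thesis by simp
qed

lemma perp_range:
  assumes P: "real_proj P" and w: "w \<in> range P"
  shows "(y - P y) \<bullet> w = 0"
proof -
  have "P w = w" using rp_fix[OF P w] .
  then have "(y - P y) \<bullet> w = y \<bullet> P w - P y \<bullet> P w" by (simp add: inner_diff_left)
  also have "\<dots> = 0" using P by (simp add: real_proj_def)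
  finally show ?thesis .
qed

lemma cspan_zero:
  fixes B :: "'a::{real_inner,complete_space} set"
  assumes c: "complex_structure J" and nf: "\<not> fin_dim_real (UNIV :: 'a set)"
    and mu: "fin_add_prob_measure J \<mu>" and fB: "finite B"
  shows "\<mu> (proj_onto (span (B \<union> J ` B))) = 0"
  using fB
proof (induction B rule: finite_induct)
  case empty
  have "proj_onto (range (\<lambda>x::'a. 0::'a)) = (\<lambda>x. 0)" using proj_onto_eq[OF rp_zero] by metis
  moreover have "range (\<lambda>x::'a. 0::'a) = span ({} \<union> J ` {})" by auto
  ultimately show ?case using fin_add_basic(3)[OF mu] by simp
next
  case (insert b B)
  define G where "G = B \<union> J ` B"
  have fG: "finite G" using insert by (simp add: G_def)
  define P where "P = proj_onto (span G)"
  have P: "real_proj P" "range P = span G" using proj_onto_span[OF fG] by (auto simp: P_def)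
  have IH: "\<mu> P = 0" using insert by (simp add: P_def G_def)
  define cv where "cv = b - P b"
  have cvW: "cv \<bullet> w = 0" if "w \<in> span G" for w
    unfolding cv_def by (rule perp_range[OF P(1)]) (use that P(2) in simp)
  have PbW: "P b \<in> span G" using P(2) by blast
  have JPbW: "J (P b) \<in> span G" unfolding G_def by (rule cs_span_inv[OF c]) (use PbW in \<open>simp add: G_def\<close>)
  have fI: "finite (insert b B \<union> J ` insert b B)" using insert by simp
  have nonneg: "0 \<le> \<mu> (proj_onto (span (insert b B \<union> J ` insert b B)))"
    using fin_add_basic(1)[OF mu] proj_onto_span[OF fI] by blast
  show ?case
  proof (cases "cv = 0")
    case True
    then have bW: "b \<in> span G" using PbW by (simp add: cv_def)
    have JbW: "J b \<in> span G" unfolding G_def by (rule cs_span_inv[OF c]) (use bW in \<open>simp add: G_def\<close>)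
    have "span (insert b B \<union> J ` insert b B) \<subseteq> span G"
      using bW JbW by (intro span_minimal) (auto simp: G_def intro: span_base)
    then have "\<mu> (proj_onto (span (insert b B \<union> J ` insert b B))) \<le> \<mu> (proj_onto (span G))"
      by (rule mono_span[OF mu fI fG])
    then show ?thesis using IH nonneg by (simp add: P_def)
  next
    case False
    define u where "u = (1 / norm cv) *\<^sub>R cv"
    have uu: "u \<bullet> u = 1" using False
      by (simp add: u_def power2_norm_eq_inner[symmetric] power2_eq_square)
    have uW: "u \<bullet> w = 0" if "w \<in> span G" for w using cvW[OF that] by (simp add: u_def)
    have b_eq: "b = P b + norm cv *\<^sub>R u" using False by (simp add: u_def cv_def)
    have Jb_eq: "J b = J (P b) + norm cv *\<^sub>R J u"
      by (subst b_eq) (simp add: cs_add[OF c] cs_scale[OF c])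
    define L where "L = {u, J u}"
    have fL: "finite L" by (simp add: L_def)
    have om: "\<forall>a\<in>G. \<forall>x\<in>L. a \<bullet> J x = 0"
    proof (intro ballI)
      fix a x assume a: "a \<in> G" and x: "x \<in> L"
      have aW: "a \<in> span G" using a by (rule span_base)
      have JaW: "J a \<in> span G" unfolding G_def by (rule cs_span_inv[OF c]) (use aW in \<open>simp add: G_def\<close>)
      have "a \<bullet> J u = 0"
      proof -
        have "J a \<bullet> u = 0" using uW[OF JaW] by (simp add: inner_commute)
        moreover have "J a \<bullet> u = - (a \<bullet> J u)" by (rule cs_adj[OF c])
        ultimately show ?thesis by simp
      qed
      moreover have "a \<bullet> J (J u) = 0" using uW[OF aW] c by (simp add: inner_commute)
      ultimately show "a \<bullet> J x = 0" using x by (auto simp: L_def)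
    qed
    have sub: "span (insert b B \<union> J ` insert b B) \<subseteq> span (G \<union> L)"
    proof (rule span_minimal[OF _ subspace_span])
      have GL: "span G \<subseteq> span (G \<union> L)" by (rule span_mono) blast
      have uL: "u \<in> span (G \<union> L)" "J u \<in> span (G \<union> L)" by (auto simp: L_def intro: span_base)
      have "b \<in> span (G \<union> L)" using b_eq GL PbW uL by (metis span_add span_mul subsetD)
      moreover have "J b \<in> span (G \<union> L)" using Jb_eq GL JPbW uL by (metis span_add span_mul subsetD)
      moreover have "B \<union> J ` B \<subseteq> span (G \<union> L)" by (auto simp: G_def intro: span_base)
      ultimately show "insert b B \<union> J ` insert b B \<subseteq> span (G \<union> L)" by auto
    qed
    have fGL: "finite (G \<union> L)" using fG fL by simp
    have "\<mu> (proj_onto (span (insert b B \<union> J ` insert b B))) \<le> \<mu> (proj_onto (span (G \<union> L)))"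
      by (rule mono_span[OF mu fI fGL sub])
    also have "\<dots> \<le> \<mu> (proj_onto (span G)) + \<mu> (proj_onto (span L))"
      by (rule pair_bound[OF c mu fG fL om])
    also have "\<mu> (proj_onto (span L)) = 0" unfolding L_def by (rule line_zero[OF c nf mu uu])
    finally show ?thesis using IH nonneg by (simp add: P_def)
  qed
qed

lemma part_a:
  fixes J :: "'a::{real_inner,complete_space} \<Rightarrow> 'a"
  assumes c: "complex_structure J" and nf: "\<not> fin_dim_real (UNIV :: 'a set)"
    and mu: "fin_add_prob_measure J \<mu>" and E: "real_proj E" and fd: "fin_dim_real (range E)"
  shows "\<mu> E = 0"
proof -
  obtain B where fB: "finite B" and sB: "span B = range E" using fd by (auto simp: fin_dim_real_def)
  have EE: "E = proj_onto (span B)" using proj_onto_eq[OF E] sB by simp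
  have fBJ: "finite (B \<union> J ` B)" using fB by simp
  have "\<mu> (proj_onto (span B)) \<le> \<mu> (proj_onto (span (B \<union> J ` B)))"
    by (rule mono_span[OF mu fB fBJ]) (rule span_mono, blast)
  also have "\<dots> = 0" by (rule cspan_zero[OF c nf mu fB])
  finally show ?thesis using fin_add_basic(1)[OF mu E] EE by simp
qed

lemma prob_imp_fin:
  assumes "prob_measure J \<mu>"
  shows "fin_add_prob_measure J \<mu>"
  unfolding fin_add_prob_measure_def
proof (intro conjI allI impI)
  show "prob_basic J \<mu>" using assms by (simp add: prob_measure_def)
  fix Q assume Q: "finite Q \<and> Q \<subseteq> Collect real_proj \<and> pairwise_separated J Q"
  then have "(\<mu> has_sum \<mu> (proj_join Q)) Q"
    using assms by (simp add: prob_measure_def countable_finite)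
  moreover have "(\<mu> has_sum (\<Sum>E\<in>Q. \<mu> E)) Q" using Q by (simp add: has_sum_finite)
  ultimately show "\<mu> (proj_join Q) = (\<Sum>E\<in>Q. \<mu> E)" by (rule has_sum_unique)
qed

lemma part_b:
  fixes J :: "'a::{real_inner,complete_space} \<Rightarrow> 'a"
  assumes c: "complex_structure J" and nf: "\<not> fin_dim_real (UNIV :: 'a set)"
    and sep: "separable_space (euclidean :: 'a topology)"
  shows "\<not> (\<exists>\<mu>. prob_measure J \<mu>)"
proof
  assume "\<exists>\<mu>. prob_measure J \<mu>"
  then obtain \<mu> where pm: "prob_measure J \<mu>" by blast
  have mu: "fin_add_prob_measure J \<mu>" by (rule prob_imp_fin[OF pm])
  obtain C :: "'a set" where C: "countable C" "closure C = UNIV"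
    using sep by (auto simp: separable_space_def)
  have "C \<noteq> {}" using C(2) by auto
  define d where "d = from_nat_into C"
  have rd: "range d = C" using C(1) \<open>C \<noteq> {}\<close> by (simp add: d_def)
  define Wg where "Wg = (\<lambda>n. d ` {..<n} \<union> J ` d ` {..<n})"
  have fWg: "finite (Wg n)" for n by (simp add: Wg_def)
  define Pn where "Pn = (\<lambda>n. proj_onto (span (Wg n)))"
  have Pn: "real_proj (Pn n)" "range (Pn n) = span (Wg n)" for n
    using proj_onto_span[OF fWg] by (auto simp: Pn_def)
  define cv where "cv = (\<lambda>n. d n - Pn n (d n))"
  define G where "G = (\<lambda>n. {cv n} \<union> J ` {cv n})"
  have fG: "finite (G n)" for n by (simp add: G_def)
  define L where "L = (\<lambda>n. proj_onto (span (G n)))"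
  have L: "real_proj (L n)" "range (L n) = span (G n)" for n
    using proj_onto_span[OF fG] by (auto simp: L_def)
  have mu0: "\<mu> (L n) = 0" for n unfolding L_def G_def by (rule cspan_zero[OF c nf mu]) simp
  have cvW: "cv n \<bullet> w = 0" if "w \<in> span (Wg n)" for n w
    unfolding cv_def by (rule perp_range[OF Pn(1)]) (use that Pn(2) in simp)
  have Wmono: "span (Wg m) \<subseteq> span (Wg n)" if "m \<le> n" for m n
    using that by (intro span_mono) (auto simp: Wg_def)
  have cvin: "cv m \<in> span (Wg n)" if "m < n" for m n
  proof -
    have "d m \<in> span (Wg n)" using that by (auto simp: Wg_def intro: span_base)
    moreover have "Pn m (d m) \<in> span (Wg n)" using Pn(2)[of m] Wmono[of m n] that by auto
    ultimately show ?thesis by (simp add: cv_def span_diff)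
  qed
  have Jinv: "J x \<in> span (Wg n)" if "x \<in> span (Wg n)" for x n
    using cs_span_inv[OF c, of x "d ` {..<n}"] that by (simp add: Wg_def)
  have omlt: "\<forall>a\<in>G m. \<forall>b\<in>G n. a \<bullet> J b = 0" if "m < n" for m n
  proof (intro ballI)
    fix a b assume a: "a \<in> G m" and b: "b \<in> G n"
    have aW: "a \<in> span (Wg n)" using a cvin[OF that] Jinv by (auto simp: G_def)
    have JaW: "J a \<in> span (Wg n)" using Jinv[OF aW] .
    have "a \<bullet> J (cv n) = 0"
    proof -
      have "J a \<bullet> cv n = 0" using cvW[OF JaW] by (simp add: inner_commute)
      moreover have "J a \<bullet> cv n = - (a \<bullet> J (cv n))" by (rule cs_adj[OF c])
      ultimately show ?thesis by simp
    qed
    moreover have "a \<bullet> J (J (cv n)) = 0" using cvW[OF aW] c by (simp add: inner_commute)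
    ultimately show "a \<bullet> J b = 0" using b by (auto simp: G_def)
  qed
  define Q where "Q = range L"
  have pQ: "pairwise_separated J Q"
    unfolding pairwise_separated_def Q_def
  proof (intro ballI impI)
    fix E F assume "E \<in> range L" "F \<in> range L" "E \<noteq> F"
    then obtain m n where mn: "E = L m" "F = L n" "m \<noteq> n" by auto
    show "separated J E F"
    proof (cases "m < n")
      case True
      show ?thesis unfolding mn L_def by (rule sep_span[OF c fG fG omlt[OF True]])
    next
      case False
      then have "n < m" using mn(3) by simp
      show ?thesis unfolding mn L_def by (rule sep_span[OF c fG fG omega_sym[OF c omlt[OF \<open>n < m\<close>]]])
    qed
  qed
  have sQ: "Q \<subseteq> Collect real_proj" using L by (auto simp: Q_def)
  have cQ: "countable Q" by (simp add: Q_def)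
  define T where "T = span (range cv \<union> J ` range cv)"
  have UT: "span (\<Union>E\<in>Q. range E) = T"
  proof -
    have "(\<Union>E\<in>Q. range E) = (\<Union>n. span (G n))" using L(2) by (auto simp: Q_def)
    moreover have "span (\<Union>n. span (G n)) = T"
      unfolding T_def span_eq
    proof
      show "(\<Union>n. span (G n)) \<subseteq> span (range cv \<union> J ` range cv)"
      proof (rule UN_least)
        fix n show "span (G n) \<subseteq> span (range cv \<union> J ` range cv)"
          by (rule span_mono) (auto simp: G_def)
      qed
      show "range cv \<union> J ` range cv \<subseteq> span (\<Union>n. span (G n))"
        by (auto simp: G_def intro!: span_base)
    qed
    ultimately show ?thesis by simp
  qed
  have dT: "d n \<in> T" for n
  proof (induction n rule: less_induct)
    case (less n)
    have "Wg n \<subseteq> T"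
    proof
      fix x assume "x \<in> Wg n"
      then obtain m where m: "m < n" "x = d m \<or> x = J (d m)" by (auto simp: Wg_def)
      have "d m \<in> T" using less m by blast
      then have "J (d m) \<in> T" unfolding T_def by (rule cs_span_inv[OF c])
      then show "x \<in> T" using m \<open>d m \<in> T\<close> by auto
    qed
    then have "span (Wg n) \<subseteq> T" unfolding T_def by (rule span_minimal[OF _ subspace_span])
    then have "Pn n (d n) \<in> T" using Pn(2) by blast
    moreover have "cv n \<in> T" unfolding T_def by (rule span_base) simp
    moreover have "d n = Pn n (d n) + cv n" by (simp add: cv_def)
    ultimately show ?case unfolding T_def using span_add by metis
  qed
  have "C \<subseteq> T" using dT rd by auto
  then have "closure C \<subseteq> closure T" by (rule closure_mono)
  then have "closure T = UNIV" using C(2) by auto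
  then have "proj_join Q = proj_onto UNIV" unfolding proj_join_def using UT by simp
  also have "\<dots> = id" using proj_onto_eq[OF rp_id] by simp
  finally have jQ: "proj_join Q = id" .
  have "(\<mu> has_sum \<mu> id) Q" using pm cQ sQ pQ jQ by (auto simp: prob_measure_def)
  moreover have "(\<mu> has_sum 0) Q" by (rule has_sum_0) (auto simp: Q_def mu0)
  ultimately have "\<mu> id = 0" by (rule has_sum_unique)
  moreover have "\<mu> id = 1" using mu by (simp add: fin_add_prob_measure_def prob_basic_def)
  ultimately show False by simp
qed

theorem theorem5p3:
  fixes J :: "'a::{real_inner,complete_space} \<Rightarrow> 'a"
  assumes "complex_structure J"
    and "\<not> fin_dim_real (UNIV :: 'a set)"
  shows "(\<forall>\<mu>. fin_add_prob_measure J \<mu> \<longrightarrow>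
            (\<forall>E. real_proj E \<and> fin_dim_real (range E) \<longrightarrow> \<mu> E = 0))
       \<and> (separable_space (euclidean :: 'a topology) \<longrightarrow> \<not> (\<exists>\<mu>. prob_measure J \<mu>))"
  using part_a[OF assms] part_b[OF assms] by blast

end
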